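(* Let $d\ge1$. For all disjoint rectangles $P,Q\subseteq[0,1)^d$ that are translates of each other, the rectangle transposition $\tau_{P,Q}$ is a finite product of restricted shuffles in $\operatorname{Rec}_d$.
   Context: A rectangle in $\mathbb{R}^d$ is a set $\prod_{i=1}^d[a_i,b_i)$ with $a_i<b_i$ real. $\operatorname{Rec}_d$ is the group of bijections $f$ of $[0,1)^d$ for which there is a finite partition of $[0,1)^d$ into rectangles on each of which $f$ is a translation. For disjoint rectangles $P,Q$ with $Q=P+v$, $\tau_{P,Q}$ is translation by $v$ on $P$, by $-v$ on $Q$, and the identity elsewhere. A restricted shuffle: for a rectangle $P=\prod_j[a_j,b_j)\subseteq[0,1)^d$, an index $i$ and $c\in(a_i,b_i)$, let $P'$ (resp. $P''$) be obtained from $P$ by replacing $[a_i,b_i)$ by $[a_i,c)$ (resp. $[c,b_i)$); the restricted shuffle is translation by $(b_i-c)e_i$ on $P'$, by $-(c-a_i)e_i$ on $P''$, and the identity outside $P$ ($e_i$ the standard basis vector). *)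

theory Defs
  imports "HOL-Analysis.Analysis"
begin

text \<open>Points of R^d are vectors of type real^'d, 'd a finite (hence nonempty) index type,
  so d = CARD('d) \<ge> 1 is arbitrary.\<close>

definition unit_cube :: "(real^'d) set" where
  "unit_cube = {x. \<forall>i. 0 \<le> x$i \<and> x$i < 1}"

definition hbox :: "real^'d \<Rightarrow> real^'d \<Rightarrow> (real^'d) set" where
  "hbox a b = {x. \<forall>i. a$i \<le> x$i \<and> x$i < b$i}"

definition is_rectangle :: "(real^'d) set \<Rightarrow> bool" where
  "is_rectangle P \<longleftrightarrow> (\<exists>a b. (\<forall>i. a$i < b$i) \<and> P = hbox a b)"

definition rect_transp :: "(real^'d) set \<Rightarrow> (real^'d) set \<Rightarrow> real^'d \<Rightarrow> real^'d \<Rightarrow> real^'d" where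
  "rect_transp P Q v x = (if x \<in> P then x + v else if x \<in> Q then x - v else x)"

definition restricted_shuffle :: "real^'d \<Rightarrow> real^'d \<Rightarrow> 'd \<Rightarrow> real \<Rightarrow> real^'d \<Rightarrow> real^'d" where
  "restricted_shuffle a b i c x =
     (if x \<in> hbox a (\<chi> j. if j = i then c else b$j) then x + (b$i - c) *\<^sub>R axis i 1
      else if x \<in> hbox (\<chi> j. if j = i then c else a$j) b then x - (c - a$i) *\<^sub>R axis i 1
      else x)"

definition is_restricted_shuffle :: "(real^'d \<Rightarrow> real^'d) \<Rightarrow> bool" where
  "is_restricted_shuffle f \<longleftrightarrow>
     (\<exists>a b i c. (\<forall>j. a$j < b$j) \<and> hbox a b \<subseteq> unit_cube \<and> a$i < c \<and> c < b$i
        \<and> f = restricted_shuffle a b i c)"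

end

theory Submission imports Defs begin

definition offax :: "real^'d \<Rightarrow> real^'d \<Rightarrow> 'd \<Rightarrow> real^'d \<Rightarrow> bool" where
  "offax a b i x = (\<forall>j. j \<noteq> i \<longrightarrow> a$j \<le> x$j \<and> x$j < b$j)"

lemma axis_nth1[simp]: "axis i (1::real) $ j = (if j = i then 1 else 0)"
  by (simp add: axis_def)

lemma offax_shift[simp]: "offax a b i (x + s *\<^sub>R axis i 1) = offax a b i x"
  "offax a b i (x - s *\<^sub>R axis i 1) = offax a b i x"
  by (auto simp: offax_def)

lemma mem_hbox_i:
  assumes "\<forall>j. j \<noteq> i \<longrightarrow> a'$j = a$j \<and> b'$j = b$j"
  shows "x \<in> hbox a' b' \<longleftrightarrow> offax a b i x \<and> a'$i \<le> x$i \<and> x$i < b'$i"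
proof -
  have "x \<in> hbox a' b' \<longleftrightarrow> (\<forall>j. a'$j \<le> x$j \<and> x$j < b'$j)" by (simp add: hbox_def)
  also have "\<dots> \<longleftrightarrow> (\<forall>j. j \<noteq> i \<longrightarrow> a'$j \<le> x$j \<and> x$j < b'$j) \<and> a'$i \<le> x$i \<and> x$i < b'$i"
    by (metis (no_types, lifting))
  also have "(\<forall>j. j \<noteq> i \<longrightarrow> a'$j \<le> x$j \<and> x$j < b'$j) \<longleftrightarrow> offax a b i x"
    unfolding offax_def using assms by auto
  finally show ?thesis .
qed

lemma rs_eval:
  assumes "\<forall>j. j \<noteq> i \<longrightarrow> a'$j = a$j \<and> b'$j = b$j"
  shows "restricted_shuffle a' b' i c x = (if offax a b i x then
     (if a'$i \<le> x$i \<and> x$i < c then x + (b'$i - c) *\<^sub>R axis i 1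
      else if c \<le> x$i \<and> x$i < b'$i then x - (c - a'$i) *\<^sub>R axis i 1 else x) else x)"
proof -
  have 1: "\<forall>j. j \<noteq> i \<longrightarrow> a'$j = a$j \<and> (\<chi> j. if j = i then c else b'$j)$j = b$j"
    "\<forall>j. j \<noteq> i \<longrightarrow> (\<chi> j. if j = i then c else a'$j)$j = a$j \<and> b'$j = b$j"
    using assms by auto
  have 2: "(\<chi> j. if j = i then c else b'$j)$i = c" "(\<chi> j. if j = i then c else a'$j)$i = c" by simp_all
  show ?thesis unfolding restricted_shuffle_def mem_hbox_i[OF 1(1)] mem_hbox_i[OF 1(2)] 2
    by (cases "offax a b i x") (simp_all only: simp_thms if_True if_False)
qed

lemma rt_eval:
  assumes "\<forall>j. j \<noteq> i \<longrightarrow> a'$j = a$j \<and> b'$j = b$j"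
  shows "rect_transp (hbox a' b') (hbox (a' + t *\<^sub>R axis i 1) (b' + t *\<^sub>R axis i 1)) (t *\<^sub>R axis i 1) x
    = (if offax a b i x then
     (if a'$i \<le> x$i \<and> x$i < b'$i then x + t *\<^sub>R axis i 1
      else if a'$i + t \<le> x$i \<and> x$i < b'$i + t then x - t *\<^sub>R axis i 1 else x) else x)"
proof -
  have 1: "\<forall>j. j \<noteq> i \<longrightarrow> (a' + t *\<^sub>R axis i 1)$j = a$j \<and> (b' + t *\<^sub>R axis i 1)$j = b$j"
    using assms by auto
  have 2: "(a' + t *\<^sub>R axis i 1)$i = a'$i + t" "(b' + t *\<^sub>R axis i 1)$i = b'$i + t" by simp_all
  show ?thesis unfolding rect_transp_def mem_hbox_i[OF assms] mem_hbox_i[OF 1] 2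
    by (cases "offax a b i x") (simp_all only: simp_thms if_True if_False)
qed

definition SP :: "(real^'d \<Rightarrow> real^'d) \<Rightarrow> bool" where
  "SP f \<longleftrightarrow> (\<exists>fs. (\<forall>g\<in>set fs. is_restricted_shuffle g) \<and> f = foldr (\<circ>) fs id)"

lemma foldr_comp: "foldr (\<circ>) fs h = foldr (\<circ>) fs id \<circ> h"
  by (induction fs) auto

lemma SP_comp: "SP f \<Longrightarrow> SP g \<Longrightarrow> SP (f \<circ> g)"
  unfolding SP_def
proof (elim exE conjE)
  fix fs gs assume h: "\<forall>g\<in>set fs. is_restricted_shuffle g" "f = foldr (\<circ>) fs id"
    "\<forall>g\<in>set gs. is_restricted_shuffle g" "g = foldr (\<circ>) gs id"
  show "\<exists>hs. (\<forall>g\<in>set hs. is_restricted_shuffle g) \<and> f \<circ> g = foldr (\<circ>) hs id"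
  proof (intro exI[of _ "fs @ gs"] conjI)
    show "\<forall>g\<in>set (fs @ gs). is_restricted_shuffle g" using h by auto
    have "foldr (\<circ>) (fs @ gs) id = foldr (\<circ>) fs (foldr (\<circ>) gs id)" by simp
    also have "\<dots> = foldr (\<circ>) fs id \<circ> foldr (\<circ>) gs id" by (rule foldr_comp)
    finally have e: "foldr (\<circ>) (fs @ gs) id = foldr (\<circ>) fs id \<circ> foldr (\<circ>) gs id" .
    show "f \<circ> g = foldr (\<circ>) (fs @ gs) id" unfolding h(2) h(4) e ..
  qed
qed

lemma SP_single: "is_restricted_shuffle f \<Longrightarrow> SP f"
  unfolding SP_def by (intro exI[of _ "[f]"]) auto

lemma cube_iff:
  assumes "\<forall>j. a$j < b$j"
  shows "hbox a b \<subseteq> unit_cube \<longleftrightarrow> (\<forall>j. 0 \<le> a$j \<and> b$j \<le> 1)"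
proof
  assume h: "hbox a b \<subseteq> unit_cube"
  show "\<forall>j. 0 \<le> a$j \<and> b$j \<le> 1"
  proof
    fix j
    have "a \<in> hbox a b" using assms by (auto simp: hbox_def)
    hence 1: "0 \<le> a$j" using h by (auto simp: unit_cube_def)
    have "b$j \<le> 1"
    proof (rule ccontr)
      assume "\<not> b$j \<le> 1"
      define y where "y = (\<chi> k. if k = j then max (a$j) 1 else a$k)"
      have "y \<in> hbox a b" using assms \<open>\<not> b$j \<le> 1\<close> by (auto simp: hbox_def y_def)
      hence "y$j < 1" using h by (auto simp: unit_cube_def)
      thus False by (simp add: y_def)
    qed
    with 1 show "0 \<le> a$j \<and> b$j \<le> 1" by simp
  qed
next
  assume h: "\<forall>j. 0 \<le> a$j \<and> b$j \<le> 1"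
  show "hbox a b \<subseteq> unit_cube"
  proof
    fix x assume "x \<in> hbox a b"
    hence hx: "\<forall>i. a$i \<le> x$i \<and> x$i < b$i" by (simp add: hbox_def)
    have "0 \<le> x$i \<and> x$i < 1" for i using h[rule_format, of i] hx[rule_format, of i] by linarith
    thus "x \<in> unit_cube" by (simp add: unit_cube_def)
  qed
qed

definition T :: "real^'d \<Rightarrow> real^'d \<Rightarrow> real^'d \<Rightarrow> real^'d \<Rightarrow> real^'d" where
  "T a b v = rect_transp (hbox a b) (hbox (a+v) (b+v)) v"

lemma shuffle_ok:
  assumes "\<forall>j. a$j < b$j" "\<forall>j. 0 \<le> a$j \<and> b$j \<le> 1" "a$i < c" "c < b$i"
  shows "is_restricted_shuffle (restricted_shuffle a b i c)"
  unfolding is_restricted_shuffle_def using assms cube_iff[OF assms(1)] by blast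

lemma rs_eval':
  assumes "\<forall>j. j \<noteq> i \<longrightarrow> a'$j = a$j \<and> b'$j = b$j"
  shows "restricted_shuffle a' b' i c x = x + (if offax a b i x then
     (if a'$i \<le> x$i \<and> x$i < c then (b'$i - c)
      else if c \<le> x$i \<and> x$i < b'$i then - (c - a'$i) else 0) else 0) *\<^sub>R axis i 1"
  unfolding rs_eval[OF assms] by (simp add: algebra_simps)

lemma rt_eval':
  assumes "\<forall>j. j \<noteq> i \<longrightarrow> a'$j = a$j \<and> b'$j = b$j"
  shows "rect_transp (hbox a' b') (hbox (a' + t *\<^sub>R axis i 1) (b' + t *\<^sub>R axis i 1)) (t *\<^sub>R axis i 1) x
    = x + (if offax a b i x then
     (if a'$i \<le> x$i \<and> x$i < b'$i then t
      else if a'$i + t \<le> x$i \<and> x$i < b'$i + t then - t else 0) else 0) *\<^sub>R axis i 1"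
  unfolding rt_eval[OF assms] by (simp add: algebra_simps)

lemma shift_add: "(x + s *\<^sub>R axis i (1::real)) + s' *\<^sub>R axis i 1 = x + (s + s') *\<^sub>R axis i 1"
  by (simp add: algebra_simps scaleR_add_left)

lemma shift_comp: "(x + s *\<^sub>R axis i (1::real)) $ i = x$i + s" by simp

lemma axis_pos:
  assumes ab: "\<forall>j. a$j < b$j" and c1: "\<forall>j. 0 \<le> a$j \<and> b$j \<le> 1"
    and c2: "\<forall>j. 0 \<le> (a + t *\<^sub>R axis i 1)$j \<and> (b + t *\<^sub>R axis i 1)$j \<le> 1"
    and tw: "b$i - a$i \<le> t"
  shows "SP (T a b (t *\<^sub>R axis i 1))"
proof -
  define w where "w = b$i - a$i"
  have w0: "0 < w" using ab by (simp add: w_def)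
  define b' where "b' = b + t *\<^sub>R axis i 1"
  have b'i: "b'$i = b$i + t" by (simp add: b'_def)
  have off: "\<forall>j. j \<noteq> i \<longrightarrow> a$j = a$j \<and> b$j = b$j" by simp
  have off2: "\<forall>j. j \<noteq> i \<longrightarrow> (a + w *\<^sub>R axis i 1)$j = a$j \<and> b'$j = b$j"
     "\<forall>j. j \<noteq> i \<longrightarrow> a$j = a$j \<and> b'$j = b$j" by (simp_all add: b'_def)
  have ab': "\<forall>j. a$j < b'$j"
  proof
    fix j show "a$j < b'$j" using ab[rule_format, of j] tw w0 unfolding b'_def w_def by simp
  qed
  have cb': "\<forall>j. 0 \<le> a$j \<and> b'$j \<le> 1" using c1 c2 unfolding b'_def by simp
  show ?thesis
  proof (cases "t = w")
    case True
    have e1: "T a b (t *\<^sub>R axis i 1) = restricted_shuffle a b' i (b$i)"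
    proof
      fix x
      show "T a b (t *\<^sub>R axis i 1) x = restricted_shuffle a b' i (b$i) x"
        unfolding T_def rt_eval'[OF off] rs_eval'[OF off2(2)] b'i
        using True w_def by (intro arg_cong2[where f="\<lambda>s e. x + s *\<^sub>R e"]) auto
    qed
    have s1: "is_restricted_shuffle (restricted_shuffle a b' i (b$i))"
    proof (rule shuffle_ok[OF ab' cb'])
      show "a$i < b$i" using w0 w_def by linarith
      show "b$i < b'$i" using b'i True w0 by linarith
    qed
    show ?thesis unfolding e1 by (rule SP_single[OF s1])
  next
    case False
    hence tw': "w < t" using tw w_def by simp
    define a2 where "a2 = a + w *\<^sub>R axis i 1"
    have a2i: "a2$i = a$i + w" by (simp add: a2_def)
    have e2: "T a b (t *\<^sub>R axis i 1) = restricted_shuffle a2 b' i (a$i + 2*w) \<circ> restricted_shuffle a b' i (a$i + t)"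
    proof
      fix x
      show "T a b (t *\<^sub>R axis i 1) x = (restricted_shuffle a2 b' i (a$i + 2*w) \<circ> restricted_shuffle a b' i (a$i + t)) x"
        unfolding T_def rt_eval'[OF off] comp_def rs_eval'[OF off2(2)] a2_def[symmetric]
          rs_eval'[OF off2(1)[folded a2_def]] shift_add shift_comp offax_shift b'i a2i
      proof (intro arg_cong2[where f="\<lambda>s e. x + s *\<^sub>R e"] refl)
        have bi: "b$i = a$i + w" using w_def by simp
        consider "x$i < a$i" | "a$i \<le> x$i" "x$i < a$i + w" | "a$i + w \<le> x$i" "x$i < a$i + t"
          | "a$i + t \<le> x$i" "x$i < a$i + t + w" | "a$i + t + w \<le> x$i" by linarith
        note cs = this
        show "(if offax a b i x then if a $ i \<le> x $ i \<and> x $ i < b $ i then t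
          else if a $ i + t \<le> x $ i \<and> x $ i < b $ i + t then - t else 0 else 0) =
    (if offax a b i x then if a $ i \<le> x $ i \<and> x $ i < a $ i + t then b $ i + t - (a $ i + t)
          else if a $ i + t \<le> x $ i \<and> x $ i < b $ i + t then - (a $ i + t - a $ i) else 0 else 0) +
    (if offax a b i x
     then if a $ i + w \<le> x $ i + (if offax a b i x then if a $ i \<le> x $ i \<and> x $ i < a $ i + t then b $ i + t - (a $ i + t)
          else if a $ i + t \<le> x $ i \<and> x $ i < b $ i + t then - (a $ i + t - a $ i) else 0 else 0) \<and>
             x $ i + (if offax a b i x then if a $ i \<le> x $ i \<and> x $ i < a $ i + t then b $ i + t - (a $ i + t)
          else if a $ i + t \<le> x $ i \<and> x $ i < b $ i + t then - (a $ i + t - a $ i) else 0 else 0)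
             < a $ i + 2 * w
          then b $ i + t - (a $ i + 2 * w)
          else if a $ i + 2 * w \<le> x $ i + (if offax a b i x then if a $ i \<le> x $ i \<and> x $ i < a $ i + t then b $ i + t - (a $ i + t)
          else if a $ i + t \<le> x $ i \<and> x $ i < b $ i + t then - (a $ i + t - a $ i) else 0 else 0) \<and>
                  x $ i + (if offax a b i x then if a $ i \<le> x $ i \<and> x $ i < a $ i + t then b $ i + t - (a $ i + t)
          else if a $ i + t \<le> x $ i \<and> x $ i < b $ i + t then - (a $ i + t - a $ i) else 0 else 0)
                  < b $ i + t
               then - (a $ i + 2 * w - (a $ i + w)) else 0
     else 0)"
        proof (cases "offax a b i x")
          case False then show ?thesis by simp
        next
          case True
          show ?thesis using cs
        proof cases
          case 1 then show ?thesis unfolding bi using tw' w0 True by simp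
        next
          case 2 then show ?thesis unfolding bi using tw' w0 True by simp
        next
          case 3 then show ?thesis unfolding bi using tw' w0 True by simp
        next
          case 4 then show ?thesis unfolding bi using tw' w0 True by simp
        next
          case 5 then show ?thesis unfolding bi using tw' w0 True by simp
        qed
        qed
      qed
    qed
    have s2: "is_restricted_shuffle (restricted_shuffle a b' i (a$i + t))"
    proof (rule shuffle_ok[OF ab' cb'])
      show "a$i < a$i + t" using tw' w0 by linarith
      show "a$i + t < b'$i" using b'i w_def w0 by linarith
    qed
    have s3: "is_restricted_shuffle (restricted_shuffle a2 b' i (a$i + 2*w))"
    proof (rule shuffle_ok)
      show "\<forall>j. a2$j < b'$j"
      proof
        fix j show "a2$j < b'$j" using ab'[rule_format, of j] ab[rule_format, of j] tw' w0 w_def unfolding a2_def b'_def by simp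
      qed
      show "\<forall>j. 0 \<le> a2$j \<and> b'$j \<le> 1"
      proof
        fix j show "0 \<le> a2$j \<and> b'$j \<le> 1" using cb'[rule_format, of j] w0 unfolding a2_def by simp
      qed
      show "a2$i < a$i + 2*w" using a2i w0 by linarith
      show "a$i + 2*w < b'$i" using b'i w_def tw' by linarith
    qed
    show ?thesis unfolding e2 by (rule SP_comp[OF SP_single[OF s3] SP_single[OF s2]])
  qed
qed


definition incube :: "real^'d \<Rightarrow> real^'d \<Rightarrow> bool" where
  "incube a b \<longleftrightarrow> (\<forall>j. 0 \<le> a$j \<and> b$j \<le> 1)"

lemma hbox_shift: "x \<in> hbox (a+v) (b+v) \<longleftrightarrow> x - v \<in> hbox a b"
  unfolding hbox_def by (simp add: le_diff_eq diff_less_eq)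

lemma hbox_disj:
  assumes "b$j - a$j \<le> \<bar>v$j\<bar>"
  shows "hbox a b \<inter> hbox (a+v) (b+v) = {}"
proof (rule ccontr)
  assume "hbox a b \<inter> hbox (a+v) (b+v) \<noteq> {}"
  then obtain x where "x \<in> hbox a b" "x \<in> hbox (a+v) (b+v)" by blast
  hence "a$j \<le> x$j" "x$j < b$j" "a$j + v$j \<le> x$j" "x$j < b$j + v$j" by (auto simp: hbox_def)
  note h = this
  show False
  proof (cases "v$j \<ge> 0")
    case True
    hence "\<bar>v$j\<bar> = v$j" by simp
    thus False using h assms by linarith
  next
    case False
    hence "\<bar>v$j\<bar> = - v$j" by simp
    thus False using h assms by linarith
  qed
qed

lemma rt_sym:
  assumes "P \<inter> Q = {}"
  shows "rect_transp P Q v = rect_transp Q P (-v)"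
proof
  fix x
  show "rect_transp P Q v x = rect_transp Q P (-v) x"
  proof (cases "x \<in> P")
    case True
    hence "x \<notin> Q" using assms by blast
    thus ?thesis using True by (simp add: rect_transp_def)
  next
    case False
    thus ?thesis by (simp add: rect_transp_def)
  qed
qed

lemma axis_gen:
  assumes ab: "\<forall>j. a$j < b$j" and c1: "incube a b"
    and c2: "incube (a + t *\<^sub>R axis i 1) (b + t *\<^sub>R axis i 1)"
    and tw: "b$i - a$i \<le> \<bar>t\<bar>"
  shows "SP (T a b (t *\<^sub>R axis i 1))"
proof (cases "t \<ge> 0")
  case True
  thus ?thesis using axis_pos[OF ab] c1 c2 tw unfolding incube_def by simp
next
  case False
  define v where "v = t *\<^sub>R axis i (1::real)"
  have vi: "v$i = t" by (simp add: v_def)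
  have disj: "hbox a b \<inter> hbox (a+v) (b+v) = {}" using hbox_disj[of b i a v] tw vi by simp
  have "T a b v = T (a+v) (b+v) (-v)"
    unfolding T_def rt_sym[OF disj] by simp
  moreover have "-v = (-t) *\<^sub>R axis i 1" by (simp add: v_def)
  moreover have "SP (T (a+v) (b+v) ((-t) *\<^sub>R axis i 1))"
  proof (rule axis_pos)
    show "\<forall>j. (a+v)$j < (b+v)$j" using ab by simp
    show "\<forall>j. 0 \<le> (a + v) $ j \<and> (b + v) $ j \<le> 1" using c2 by (simp add: incube_def v_def)
    show "\<forall>j. 0 \<le> (a + v + - t *\<^sub>R axis i 1) $ j \<and> (b + v + - t *\<^sub>R axis i 1) $ j \<le> 1"
      using c1 by (simp add: incube_def v_def)
    show "(b + v) $ i - (a + v) $ i \<le> - t" using tw False by simp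
  qed
  ultimately show ?thesis by (simp add: v_def)
qed

lemma three:
  assumes "P \<inter> R = {}" "R \<inter> Q = {}" "P \<inter> Q = {}"
    "\<And>x. x \<in> R \<longleftrightarrow> x - v1 \<in> P" "\<And>x. x \<in> Q \<longleftrightarrow> x - v2 \<in> R"
  shows "rect_transp P Q (v1 + v2) = rect_transp P R v1 \<circ> rect_transp R Q v2 \<circ> rect_transp P R v1"
proof
  fix x
  have Q': "x \<in> Q \<longleftrightarrow> x - (v1+v2) \<in> P" for x using assms(4,5) by (simp add: algebra_simps)
  consider "x \<in> P" | "x \<in> R" | "x \<in> Q" | "x \<notin> P" "x \<notin> Q" "x \<notin> R" by blast
  then show "rect_transp P Q (v1 + v2) x = (rect_transp P R v1 \<circ> rect_transp R Q v2 \<circ> rect_transp P R v1) x"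
  proof cases
    case 1
    have r: "x + v1 \<in> R" using assms(4) 1 by simp
    have q: "x + v1 + v2 \<in> Q" using assms(5) r by simp
    have "x \<notin> Q" "x + v1 + v2 \<notin> P" "x + v1 + v2 \<notin> R" using 1 q assms(1,2,3) by blast+
    thus ?thesis using 1 r q by (simp add: rect_transp_def add.assoc)
  next
    case 2
    have p: "x - v1 \<in> P" using assms(4) 2 by simp
    have "x \<notin> P" "x \<notin> Q" "x - v1 \<notin> R" "x - v1 \<notin> Q" using 2 p assms(1,2,3) by blast+
    thus ?thesis using 2 p by (simp add: rect_transp_def)
  next
    case 3
    have r: "x - v2 \<in> R" using assms(5) 3 by simp
    have p: "x - v2 - v1 \<in> P" using assms(4) r by simp
    have "x \<notin> P" "x \<notin> R" "x - v2 \<notin> P" "x - v2 - v1 \<notin> R" "x - v2 - v1 \<notin> Q"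
      using 3 r p assms(1,2,3) by blast+
    moreover have "x - v2 - v1 = x - (v1 + v2)" by (simp add: algebra_simps)
    ultimately show ?thesis using 3 r p by (simp add: rect_transp_def)
  next
    case 4
    thus ?thesis by (simp add: rect_transp_def)
  qed
qed

lemma good:
  "\<And>a b v. card {j. v$j \<noteq> 0} = n \<Longrightarrow> \<forall>j. a$j < b$j \<Longrightarrow> incube a b \<Longrightarrow> incube (a+v) (b+v)
    \<Longrightarrow> v \<noteq> 0 \<Longrightarrow> (\<forall>j. v$j \<noteq> 0 \<longrightarrow> b$j - a$j \<le> \<bar>v$j\<bar>) \<Longrightarrow> SP (T a b v)"
proof (induction n)
  case 0
  have "{j. v$j \<noteq> 0} = {}" using 0(1) by simp
  hence "v = 0" by (simp add: vec_eq_iff)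
  thus ?case using 0 by simp
next
  case (Suc n a b v)
  from \<open>v \<noteq> 0\<close> obtain k where vk: "v$k \<noteq> 0" by (auto simp: vec_eq_iff)
  define v1 where "v1 = v$k *\<^sub>R axis k (1::real)"
  define v2 where "v2 = v - v1"
  have v1c: "v1$j = (if j = k then v$k else 0)" for j by (simp add: v1_def)
  have v2c: "v2$j = (if j = k then 0 else v$j)" for j by (simp add: v2_def v1_def)
  have inc1: "incube a b" and inc2: "incube (a+v) (b+v)" using Suc by auto
  have incv1: "incube (a+v1) (b+v1)"
    unfolding incube_def
  proof
    fix j
    show "0 \<le> (a + v1) $ j \<and> (b + v1) $ j \<le> 1"
      using inc1 inc2 unfolding incube_def by (cases "j = k") (simp_all add: v1c)
  qed
  have wk: "b$k - a$k \<le> \<bar>v$k\<bar>" using Suc.prems(6) vk by blast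
  have s1: "SP (T a b v1)" unfolding v1_def
    by (rule axis_gen) (use Suc.prems(2) inc1 incv1 wk in \<open>simp_all add: v1_def\<close>)
  show ?case
  proof (cases "v2 = 0")
    case True
    hence "v = v1" by (simp add: v2_def)
    thus ?thesis using s1 by simp
  next
    case False
    have set_eq: "{j. v2$j \<noteq> 0} = {j. v$j \<noteq> 0} - {k}" by (auto simp: v2c)
    have cardv2: "card {j. v2$j \<noteq> 0} = n"
      unfolding set_eq using Suc.prems(1) vk by (simp add: card_Diff_singleton)
    have sum_eq: "a + v1 + v2 = a + v" "b + v1 + v2 = b + v" by (simp_all add: v2_def)
    have s2: "SP (T (a+v1) (b+v1) v2)"
    proof (rule Suc.IH[OF cardv2])
      show "\<forall>j. (a+v1)$j < (b+v1)$j" using Suc.prems(2) by simp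
      show "incube (a+v1) (b+v1)" by (rule incv1)
      show "incube (a + v1 + v2) (b + v1 + v2)" unfolding sum_eq by (rule inc2)
      show "v2 \<noteq> 0" by (rule False)
      show "\<forall>j. v2$j \<noteq> 0 \<longrightarrow> (b+v1)$j - (a+v1)$j \<le> \<bar>v2$j\<bar>"
        using Suc.prems(6) by (simp add: v2c)
    qed
    from False obtain j where vj: "v2$j \<noteq> 0" by (auto simp: vec_eq_iff)
    have d1: "hbox a b \<inter> hbox (a+v1) (b+v1) = {}" by (rule hbox_disj[of b k a]) (use wk in \<open>simp add: v1c\<close>)
    have d2: "hbox (a+v1) (b+v1) \<inter> hbox (a+v1+v2) (b+v1+v2) = {}"
      by (rule hbox_disj[of "b+v1" j "a+v1"]) (use Suc.prems(6) vj in \<open>simp add: v2c split: if_splits\<close>)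
    have d3: "hbox a b \<inter> hbox (a+v) (b+v) = {}" by (rule hbox_disj[of b k a]) (use wk in simp)
    have "T a b v = T a b v1 \<circ> T (a+v1) (b+v1) v2 \<circ> T a b v1"
    proof -
      have "v = v1 + v2" by (simp add: v2_def)
      have m5: "x \<in> hbox (a+v) (b+v) \<longleftrightarrow> x - v2 \<in> hbox (a+v1) (b+v1)" for x
        using hbox_shift[of x "a+v1" v2 "b+v1"] unfolding sum_eq .
      have "rect_transp (hbox a b) (hbox (a+v) (b+v)) (v1 + v2) =
        rect_transp (hbox a b) (hbox (a+v1) (b+v1)) v1 \<circ> rect_transp (hbox (a+v1) (b+v1)) (hbox (a+v) (b+v)) v2
        \<circ> rect_transp (hbox a b) (hbox (a+v1) (b+v1)) v1"
        by (rule three[OF d1 d2[unfolded sum_eq] d3 _ m5]) (simp add: hbox_shift)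
      thus ?thesis unfolding T_def sum_eq \<open>v = v1 + v2\<close>[symmetric] .
    qed
    thus ?thesis using SP_comp[OF SP_comp[OF s1 s2] s1] by (simp only:)
  qed
qed


lemma split_transp:
  assumes P: "\<And>x. x \<in> P \<longleftrightarrow> x \<in> P1 \<or> x \<in> P2" and d12: "P1 \<inter> P2 = {}"
    and Q: "\<And>x. x \<in> Q \<longleftrightarrow> x - v \<in> P" and Q1: "\<And>x. x \<in> Q1 \<longleftrightarrow> x - v \<in> P1"
    and Q2: "\<And>x. x \<in> Q2 \<longleftrightarrow> x - v \<in> P2" and dPQ: "P \<inter> Q = {}"
  shows "rect_transp P Q v = rect_transp P1 Q1 v \<circ> rect_transp P2 Q2 v"
proof
  fix x
  have Q1Q: "y \<in> Q1 \<Longrightarrow> y \<in> Q" for y using Q Q1 P by blast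
  have Q2Q: "y \<in> Q2 \<Longrightarrow> y \<in> Q" for y using Q Q2 P by blast
  have PQ: "y \<in> P \<Longrightarrow> y \<notin> Q" for y using dPQ by blast
  consider "x \<in> P1" | "x \<in> P2" | "x \<in> Q1" | "x \<in> Q2" | "x \<notin> P" "x \<notin> Q" using P Q Q1 Q2 by blast
  then show "rect_transp P Q v x = (rect_transp P1 Q1 v \<circ> rect_transp P2 Q2 v) x"
  proof cases
    case 1
    have "x \<in> P" "x \<notin> P2" "x \<notin> Q2" using 1 P d12 PQ Q2Q by blast+
    thus ?thesis using 1 by (simp add: rect_transp_def)
  next
    case 2
    have "x \<in> P" "x \<notin> P1" "x \<notin> Q2" using 2 P d12 PQ Q2Q by blast+
    moreover have "x + v \<in> Q2" using Q2 2 by simp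
    moreover hence "x + v \<notin> P1" using Q2Q PQ P by blast
    moreover have "x + v \<notin> Q1" using Q1[of "x+v"] 2 d12 by auto
    ultimately show ?thesis using 2 by (simp add: rect_transp_def)
  next
    case 3
    have "x \<in> Q" "x \<notin> P" "x \<notin> P1" "x \<notin> P2" "x \<notin> Q2" using 3 Q1Q PQ P Q1 Q2 d12 by blast+
    thus ?thesis using 3 by (simp add: rect_transp_def)
  next
    case 4
    have "x \<in> Q" "x \<notin> P" "x \<notin> P2" using 4 Q2Q PQ P by blast+
    moreover have "x - v \<in> P2" using Q2 4 by simp
    moreover hence "x - v \<notin> P1" "x - v \<notin> Q1" using d12 Q1Q PQ P by blast+
    ultimately show ?thesis using 4 by (simp add: rect_transp_def)
  next
    case 5
    hence "x \<notin> P1" "x \<notin> P2" "x \<notin> Q1" "x \<notin> Q2" using P Q1Q Q2Q by blast+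
    thus ?thesis using 5 by (simp add: rect_transp_def)
  qed
qed

definition meas :: "real^'d \<Rightarrow> real^'d \<Rightarrow> real^'d \<Rightarrow> nat" where
  "meas v a b = (\<Sum>j\<in>UNIV. if v$j = 0 then 0 else nat \<lceil>(b$j - a$j) / \<bar>v$j\<bar>\<rceil>)"

lemma meas_lt:
  assumes "\<forall>k. k \<noteq> j \<longrightarrow> a'$k = a$k \<and> b'$k = b$k" "v$j \<noteq> 0"
    "nat \<lceil>(b'$j - a'$j) / \<bar>v$j\<bar>\<rceil> < nat \<lceil>(b$j - a$j) / \<bar>v$j\<bar>\<rceil>"
  shows "meas v a' b' < meas v a b"
  unfolding meas_def
proof (rule sum_strict_mono_ex1)
  show "finite (UNIV :: 'a set)" by simp
  show "\<forall>k\<in>UNIV. (if v$k = 0 then 0 else nat \<lceil>(b'$k - a'$k) / \<bar>v$k\<bar>\<rceil>)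
      \<le> (if v$k = 0 then 0 else nat \<lceil>(b$k - a$k) / \<bar>v$k\<bar>\<rceil>)"
  proof
    fix k show "(if v$k = 0 then 0 else nat \<lceil>(b'$k - a'$k) / \<bar>v$k\<bar>\<rceil>)
      \<le> (if v$k = 0 then 0 else nat \<lceil>(b$k - a$k) / \<bar>v$k\<bar>\<rceil>)"
    proof (cases "k = j")
      case True
      show ?thesis unfolding True if_not_P[OF assms(2)] by (rule less_imp_le[OF assms(3)])
    next
      case False
      thus ?thesis using assms(1) by simp
    qed
  qed
  show "\<exists>k\<in>UNIV. (if v$k = 0 then 0 else nat \<lceil>(b'$k - a'$k) / \<bar>v$k\<bar>\<rceil>)
      < (if v$k = 0 then 0 else nat \<lceil>(b$k - a$k) / \<bar>v$k\<bar>\<rceil>)"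
  proof (rule bexI[of _ j])
    show "(if v$j = 0 then 0 else nat \<lceil>(b'$j - a'$j) / \<bar>v$j\<bar>\<rceil>)
      < (if v$j = 0 then 0 else nat \<lceil>(b$j - a$j) / \<bar>v$j\<bar>\<rceil>)"
      unfolding if_not_P[OF assms(2)] by (rule assms(3))
  qed simp
qed

lemma incube_mono:
  assumes "incube a b" "\<forall>k. a$k \<le> a'$k \<and> b'$k \<le> b$k"
  shows "incube a' b'"
  using assms unfolding incube_def by (meson order_trans)

lemma hbox_mono:
  assumes "\<forall>k. a$k \<le> a'$k \<and> b'$k \<le> b$k"
  shows "hbox a' b' \<subseteq> hbox a b"
  using assms unfolding hbox_def by (auto intro: order_trans less_le_trans)

lemma split_main:
  "\<And>a b. meas v a b = n \<Longrightarrow> \<forall>j. a$j < b$j \<Longrightarrow> incube a b \<Longrightarrow> incube (a+v) (b+v)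
    \<Longrightarrow> hbox a b \<inter> hbox (a+v) (b+v) = {} \<Longrightarrow> SP (T a b v)"
proof (induction n rule: less_induct)
  case (less n a b)
  have ain: "a \<in> hbox a b" using less.prems(2) by (simp add: hbox_def)
  have v0: "v \<noteq> 0"
  proof
    assume "v = 0"
    thus False using less.prems(5) ain by simp
  qed
  show ?case
  proof (cases "\<forall>j. v$j \<noteq> 0 \<longrightarrow> b$j - a$j \<le> \<bar>v$j\<bar>")
    case True
    show ?thesis by (rule good[OF refl less.prems(2,3,4) v0 True])
  next
    case False
    then obtain j where vj: "v$j \<noteq> 0" and wj: "\<bar>v$j\<bar> < b$j - a$j" by force
    define u where "u = \<bar>v$j\<bar>"
    have u0: "0 < u" using vj by (simp add: u_def)
    define c where "c = a$j + u"
    define b1 where "b1 = (\<chi> k. if k = j then c else b$k)"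
    define a2 where "a2 = (\<chi> k. if k = j then c else a$k)"
    have ab: "\<forall>k. a$k < b$k" by (rule less.prems(2))
    have cj: "a$j < c" "c < b$j" using u0 wj by (simp_all add: c_def u_def)
    have ab1: "\<forall>k. a$k < b1$k" using ab cj by (simp add: b1_def)
    have ab2: "\<forall>k. a2$k < b$k" using ab cj by (simp add: a2_def)
    have mono1: "\<forall>k. a$k \<le> a$k \<and> b1$k \<le> b$k" using cj by (simp add: b1_def)
    have mono2: "\<forall>k. a$k \<le> a2$k \<and> b$k \<le> b$k" using cj by (simp add: a2_def)
    have mono1v: "\<forall>k. (a+v)$k \<le> (a+v)$k \<and> (b1+v)$k \<le> (b+v)$k" using mono1 by simp
    have mono2v: "\<forall>k. (a+v)$k \<le> (a2+v)$k \<and> (b+v)$k \<le> (b+v)$k" using mono2 by simp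
    have off1: "\<forall>k. k \<noteq> j \<longrightarrow> a$k = a$k \<and> b1$k = b$k" by (simp add: b1_def)
    have off2: "\<forall>k. k \<noteq> j \<longrightarrow> a2$k = a$k \<and> b$k = b$k" by (simp add: a2_def)
    have off0: "\<forall>k. k \<noteq> j \<longrightarrow> a$k = a$k \<and> b$k = b$k" by simp
    have mem1: "x \<in> hbox a b1 \<longleftrightarrow> x \<in> hbox a b \<and> x$j < c" for x
      unfolding mem_hbox_i[OF off1] mem_hbox_i[OF off0] using cj by (auto simp: b1_def)
    have mem2: "x \<in> hbox a2 b \<longleftrightarrow> x \<in> hbox a b \<and> c \<le> x$j" for x
      unfolding mem_hbox_i[OF off2] mem_hbox_i[OF off0] using cj by (auto simp: a2_def)
    have split: "T a b v = T a b1 v \<circ> T a2 b v"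
      unfolding T_def
    proof (rule split_transp)
      show "x \<in> hbox a b \<longleftrightarrow> x \<in> hbox a b1 \<or> x \<in> hbox a2 b" for x using mem1 mem2 by auto
      show "hbox a b1 \<inter> hbox a2 b = {}" using mem1 mem2 by auto
    qed (simp_all add: hbox_shift less.prems(5))
    have C1: "1 < \<lceil>(b$j - a$j) / u\<rceil>"
    proof -
      have "1 < (b$j - a$j) / u" using wj u0 by (simp add: u_def field_simps)
      thus ?thesis by (simp add: less_ceiling_iff)
    qed
    have lt1: "meas v a b1 < n"
    proof -
      have e: "(b1$j - a$j) / \<bar>v$j\<bar> = 1" using u0 by (simp add: b1_def c_def u_def)
      have C1': "1 < \<lceil>(b$j - a$j) / \<bar>v$j\<bar>\<rceil>" using C1 by (simp add: u_def)
      hence "nat \<lceil>(b1$j - a$j) / \<bar>v$j\<bar>\<rceil> < nat \<lceil>(b$j - a$j) / \<bar>v$j\<bar>\<rceil>"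
        unfolding e by simp
      thus ?thesis using meas_lt[OF off1 vj] less.prems(1) by simp
    qed
    have lt2: "meas v a2 b < n"
    proof -
      have "(b$j - a2$j) / u = (b$j - a$j) / u - 1" using u0 by (simp add: a2_def c_def field_simps)
      hence "\<lceil>(b$j - a2$j) / u\<rceil> = \<lceil>(b$j - a$j) / u\<rceil> - 1" by simp
      hence "nat \<lceil>(b$j - a2$j) / \<bar>v$j\<bar>\<rceil> < nat \<lceil>(b$j - a$j) / \<bar>v$j\<bar>\<rceil>"
        using C1 by (simp add: u_def)
      thus ?thesis using meas_lt[OF off2 vj] less.prems(1) by simp
    qed
    have S1: "SP (T a b1 v)"
    proof (rule less.IH[OF lt1 refl ab1])
      show "incube a b1" by (rule incube_mono[OF less.prems(3) mono1])
      show "incube (a+v) (b1+v)" by (rule incube_mono[OF less.prems(4) mono1v])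
      show "hbox a b1 \<inter> hbox (a+v) (b1+v) = {}"
        using hbox_mono[OF mono1] hbox_mono[OF mono1v] less.prems(5) by blast
    qed
    have S2: "SP (T a2 b v)"
    proof (rule less.IH[OF lt2 refl ab2])
      show "incube a2 b" by (rule incube_mono[OF less.prems(3) mono2])
      show "incube (a2+v) (b+v)" by (rule incube_mono[OF less.prems(4) mono2v])
      show "hbox a2 b \<inter> hbox (a2+v) (b+v) = {}"
        using hbox_mono[OF mono2] hbox_mono[OF mono2v] less.prems(5) by blast
    qed
    show ?thesis unfolding split by (rule SP_comp[OF S1 S2])
  qed
qed

lemma image_hbox: "(\<lambda>x. x + v) ` hbox a b = hbox (a+v) (b+v)"
proof
  show "(\<lambda>x. x + v) ` hbox a b \<subseteq> hbox (a+v) (b+v)" by (auto simp: hbox_shift)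
  show "hbox (a+v) (b+v) \<subseteq> (\<lambda>x. x + v) ` hbox a b"
  proof
    fix y assume "y \<in> hbox (a+v) (b+v)"
    hence "y - v \<in> hbox a b" by (simp add: hbox_shift)
    thus "y \<in> (\<lambda>x. x + v) ` hbox a b" by (intro image_eqI[of _ _ "y - v"]) auto
  qed
qed

theorem mainTheorem17:
  fixes P Q :: "(real^'d) set" and v :: "real^'d"
  assumes "is_rectangle P" and "is_rectangle Q"
    and "P \<subseteq> unit_cube" and "Q \<subseteq> unit_cube"
    and "P \<inter> Q = {}"
    and "Q = (\<lambda>x. x + v) ` P"
  shows "\<exists>fs. (\<forall>f\<in>set fs. is_restricted_shuffle f) \<and>
           (\<forall>x\<in>unit_cube. rect_transp P Q v x = foldr (\<circ>) fs id x)"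
proof -
  obtain a b where ab: "\<forall>i. a$i < b$i" and P: "P = hbox a b"
    using assms(1) unfolding is_rectangle_def by blast
  have Q: "Q = hbox (a+v) (b+v)" using assms(6) P image_hbox by simp
  have abv: "\<forall>i. (a+v)$i < (b+v)$i" using ab by simp
  have i1: "incube a b" using assms(3) cube_iff[OF ab] P by (simp add: incube_def)
  have i2: "incube (a+v) (b+v)" using assms(4) cube_iff[OF abv] Q by (simp add: incube_def)
  have "SP (T a b v)" by (rule split_main[OF refl ab i1 i2]) (use assms(5) P Q in simp)
  then obtain fs where fs: "\<forall>g\<in>set fs. is_restricted_shuffle g" "T a b v = foldr (\<circ>) fs id"
    unfolding SP_def by blast
  have "rect_transp P Q v = foldr (\<circ>) fs id" using fs(2) P Q by (simp add: T_def)
  thus ?thesis using fs(1) by auto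
qed

end
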